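(* Let $X$ be a $T_0$-space such that for every nonempty closed set $C\neq X$ and every $K\in K(X)$, the set $\max(C)$ of maximal elements of $C$ (in the specialization order) is nonempty and ${\downarrow}(C\cap K)$ is closed. Then $X$ is $S^{\ast}$-well-filtered.
   Context: All spaces are $T_0$. The specialization order of $X$ is given by $x\le y$ iff $x\in cl(\{y\})$; ${\uparrow},{\downarrow}$ are taken with respect to it; a subset is saturated if it is an upper set in the specialization order. $K(X)$ denotes the set of all nonempty compact saturated subsets of $X$; a family in $K(X)$ is filtered if any two members contain a common member. $X$ is $S^{\ast}$-well-filtered if for every filtered family $\{K_i\mid i\in I\}\subseteq K(X)$, every $G\in K(X)$ and every nonempty open $U$, $\bigcap_{i\in I}K_i\cap G\subseteq U$ implies $K_i\cap G\subseteq U$ for some $i$. *)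

theory Defs
  imports "HOL-Analysis.Analysis"
begin

definition spec_le :: "'a topology \<Rightarrow> 'a \<Rightarrow> 'a \<Rightarrow> bool" where
  "spec_le X x y \<longleftrightarrow> x \<in> topspace X \<and> y \<in> topspace X \<and> x \<in> X closure_of {y}"

definition up_set :: "'a topology \<Rightarrow> 'a set \<Rightarrow> 'a set" where
  "up_set X A = {y \<in> topspace X. \<exists>x\<in>A. spec_le X x y}"

definition down_set :: "'a topology \<Rightarrow> 'a set \<Rightarrow> 'a set" where
  "down_set X A = {y \<in> topspace X. \<exists>x\<in>A. spec_le X y x}"

definition saturated :: "'a topology \<Rightarrow> 'a set \<Rightarrow> bool" where
  "saturated X A \<longleftrightarrow> A \<subseteq> topspace X \<and> up_set X A \<subseteq> A"

definition KX :: "'a topology \<Rightarrow> 'a set set" where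
  "KX X = {K. K \<noteq> {} \<and> compactin X K \<and> saturated X K}"

definition max_set :: "'a topology \<Rightarrow> 'a set \<Rightarrow> 'a set" where
  "max_set X C = {x \<in> C. \<forall>y\<in>C. spec_le X x y \<longrightarrow> y = x}"

definition filtered_family :: "'a set set \<Rightarrow> bool" where
  "filtered_family F \<longleftrightarrow> (\<forall>K1\<in>F. \<forall>K2\<in>F. \<exists>K3\<in>F. K3 \<subseteq> K1 \<inter> K2)"

definition S_star_well_filtered :: "'a topology \<Rightarrow> bool" where
  "S_star_well_filtered X \<longleftrightarrow>
     (\<forall>F. F \<noteq> {} \<and> F \<subseteq> KX X \<and> filtered_family F \<longrightarrow>
       (\<forall>G\<in>KX X. \<forall>U. openin X U \<and> U \<noteq> {} \<and> \<Inter>F \<inter> G \<subseteq> U \<longrightarrow>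
          (\<exists>K\<in>F. K \<inter> G \<subseteq> U)))"

end

theory Submission
  imports Defs
begin

lemma min_closed:
  assumes C1: "closedin X C1" and KF: "\<forall>K\<in>F. compactin X K \<and> C1 \<inter> K \<noteq> {}"
  shows "\<exists>A. (closedin X A \<and> A \<subseteq> C1 \<and> (\<forall>K\<in>F. A \<inter> K \<noteq> {})) \<and>
     (\<forall>B. closedin X B \<and> B \<subseteq> C1 \<and> (\<forall>K\<in>F. B \<inter> K \<noteq> {}) \<and> B \<subseteq> A \<longrightarrow> B = A)"
proof -
  define T where "T = topspace X"
  define Ops where "Ops = {W. openin X W \<and> T - C1 \<subseteq> W \<and> (\<forall>K\<in>F. (T - W) \<inter> K \<noteq> {})}"
  have "\<forall>Ch\<in>chains Ops. \<exists>U\<in>Ops. \<forall>Y\<in>Ch. Y \<subseteq> U"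
  proof
    fix Ch assume Ch: "Ch \<in> chains Ops"
    hence ChO: "Ch \<subseteq> Ops" and chn: "subset.chain Ops Ch"
      by (auto simp: chains_def chain_subset_def subset_chain_def)
    define U where "U = (T - C1) \<union> \<Union>Ch"
    have "\<forall>S\<in>Ch. openin X S" using ChO by (auto simp: Ops_def)
    hence oU: "openin X U" unfolding U_def T_def using C1
      by (auto intro!: openin_Union openin_Un openin_diff)
    have "\<forall>K\<in>F. (T - U) \<inter> K \<noteq> {}"
    proof (intro ballI notI)
      fix K assume K: "K \<in> F" and e: "(T - U) \<inter> K = {}"
      have cK: "compactin X K" and hK: "C1 \<inter> K \<noteq> {}" using K KF by auto
      have KT: "K \<subseteq> T" using cK compactin_subset_topspace T_def by blast
      hence "K \<subseteq> \<Union>(insert (T - C1) Ch)" using e U_def by auto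
      moreover have "\<forall>V\<in>insert (T - C1) Ch. openin X V" using C1 ChO
        by (auto simp: Ops_def T_def)
      ultimately obtain Fi where Fi: "finite Fi" "Fi \<subseteq> insert (T - C1) Ch" "K \<subseteq> \<Union>Fi"
        using cK unfolding compactin_def by meson
      have K2: "K \<subseteq> (T - C1) \<union> \<Union>(Fi \<inter> Ch)" using Fi by blast
      show False
      proof (cases "Fi \<inter> Ch = {}")
        case True
        then show ?thesis using K2 hK by auto
      next
        case False
        have "subset.chain Ops (Fi \<inter> Ch)" using chn
          using Int_lower2 unfolding subset_chain_def by (metis (no_types, lifting) IntD2 subset_trans)
        hence "\<Union>(Fi \<inter> Ch) \<in> Fi \<inter> Ch" using Union_in_chain[of "Fi \<inter> Ch" Ops] Fi False by simp
        hence Wi: "\<Union>(Fi \<inter> Ch) \<in> Ops" using ChO by blast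
        define W where "W = \<Union>(Fi \<inter> Ch)"
        have WO: "W \<in> Ops" using Wi W_def by simp
        hence "T - C1 \<subseteq> W" "\<forall>K\<in>F. (T - W) \<inter> K \<noteq> {}" unfolding Ops_def by auto
        moreover have "K \<subseteq> (T - C1) \<union> W" using K2 W_def by simp
        ultimately have "K \<subseteq> W" by blast
        then show False using K KT \<open>\<forall>K\<in>F. (T - W) \<inter> K \<noteq> {}\<close> by blast
      qed
    qed
    hence "U \<in> Ops" using oU unfolding Ops_def U_def by auto
    moreover have "\<forall>Y\<in>Ch. Y \<subseteq> U" unfolding U_def by blast
    ultimately show "\<exists>U\<in>Ops. \<forall>Y\<in>Ch. Y \<subseteq> U" by blast
  qed
  then obtain M where M: "M \<in> Ops" and Mmax: "\<forall>Y\<in>Ops. M \<subseteq> Y \<longrightarrow> Y = M"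
    using Zorn_Lemma2[of Ops] by blast
  define A where "A = T - M"
  have MT: "M \<subseteq> T" using M unfolding Ops_def T_def by (auto dest: openin_subset)
  show ?thesis
  proof (intro exI conjI allI impI)
    show "closedin X A" using M unfolding A_def Ops_def T_def by auto
    show "A \<subseteq> C1" using M unfolding A_def Ops_def by auto
    show "\<forall>K\<in>F. A \<inter> K \<noteq> {}" using M unfolding A_def Ops_def by auto
    fix B assume B: "closedin X B \<and> B \<subseteq> C1 \<and> (\<forall>K\<in>F. B \<inter> K \<noteq> {}) \<and> B \<subseteq> A"
    have BT: "B \<subseteq> T" using B closedin_subset T_def by blast
    have "T - B \<in> Ops" using B BT unfolding Ops_def T_def
      by (auto simp: Diff_Diff_Int Int_absorb1 intro!: openin_diff)
    moreover have "M \<subseteq> T - B" using B MT unfolding A_def by auto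
    ultimately have "T - B = M" using Mmax by blast
    thus "B = A" using BT MT unfolding A_def by auto
  qed
qed


lemma spec_refl: "x \<in> topspace X \<Longrightarrow> spec_le X x x"
  unfolding spec_le_def using closure_of_subset[of "{x}" X] by auto

lemma closed_lower: "closedin X C \<Longrightarrow> x \<in> C \<Longrightarrow> spec_le X y x \<Longrightarrow> y \<in> C"
  unfolding spec_le_def
  by (meson closure_of_minimal empty_subsetI insert_subset subsetD)

lemma sat_upper: "saturated X K \<Longrightarrow> x \<in> K \<Longrightarrow> spec_le X x y \<Longrightarrow> y \<in> K"
  unfolding saturated_def up_set_def spec_le_def by blast

lemma down_lower_closed: "closedin X C \<Longrightarrow> down_set X (C \<inter> K) \<subseteq> C"
proof
  fix y assume C: "closedin X C" and y: "y \<in> down_set X (C \<inter> K)"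
  then obtain x where "x \<in> C" "spec_le X y x" unfolding down_set_def by auto
  thus "y \<in> C" using closed_lower[OF C] by metis
qed

theorem mainTheorem10:
  fixes X :: "'a topology"
  assumes "t0_space X"
    and "\<And>C K. closedin X C \<Longrightarrow> C \<noteq> {} \<Longrightarrow> C \<noteq> topspace X \<Longrightarrow> K \<in> KX X \<Longrightarrow>
           max_set X C \<noteq> {} \<and> closedin X (down_set X (C \<inter> K))"
  shows "S_star_well_filtered X"
  unfolding S_star_well_filtered_def
proof (intro allI impI ballI)
  fix F G U
  assume H: "F \<noteq> {} \<and> F \<subseteq> KX X \<and> filtered_family F"
    and GK: "G \<in> KX X" and HU: "openin X U \<and> U \<noteq> {} \<and> \<Inter>F \<inter> G \<subseteq> U"
  have Fne: "F \<noteq> {}" and FK: "F \<subseteq> KX X" and filt: "filtered_family F" using H by auto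
  have KT: "\<And>K. K \<in> KX X \<Longrightarrow> K \<subseteq> topspace X" unfolding KX_def  saturated_def by blast
  have Ksat: "\<And>K. K \<in> KX X \<Longrightarrow> saturated X K" unfolding KX_def by blast
  have Kcomp: "\<And>K. K \<in> KX X \<Longrightarrow> compactin X K" unfolding KX_def by blast
  show "\<exists>K\<in>F. K \<inter> G \<subseteq> U"
  proof (rule ccontr)
    assume nK: "\<not> (\<exists>K\<in>F. K \<inter> G \<subseteq> U)"
    define C where "C = topspace X - U"
    have UT: "U \<subseteq> topspace X" using HU openin_subset  by blast
    have cC: "closedin X C" using HU unfolding C_def  by auto
    have CT: "C \<noteq> topspace X" using HU UT unfolding C_def by blast
    hence CT': "C \<noteq> topspace X" by simp
    have hit: "\<forall>K\<in>F. \<exists>z. z \<in> K \<and> z \<in> G \<and> z \<in> C"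
      using nK KT FK unfolding C_def by blast
    have Cne: "C \<noteq> {}" using hit Fne by blast
    define C1 where "C1 = down_set X (C \<inter> G)"
    have cC1: "closedin X C1" using assms(2)[OF cC Cne CT' GK] C1_def by blast
    have C1C: "C1 \<subseteq> C" using down_lower_closed[OF cC] C1_def by blast
    have hit1: "\<forall>K\<in>F. C1 \<inter> K \<noteq> {}"
    proof
      fix K assume K: "K \<in> F"
      then obtain z where z: "z \<in> K" "z \<in> G" "z \<in> C" using hit by blast
      have "z \<in> topspace X" using z KT K FK by blast
      hence "spec_le X z z" using spec_refl  by metis
      hence "z \<in> C1" unfolding C1_def down_set_def using z \<open>z \<in> topspace X\<close>  by blast
      thus "C1 \<inter> K \<noteq> {}" using z by blast
    qed
    have KF: "\<forall>K\<in>F. compactin X K \<and> C1 \<inter> K \<noteq> {}" using hit1 FK Kcomp by blast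
    obtain A where A0: "closedin X A \<and> A \<subseteq> C1 \<and> (\<forall>K\<in>F. A \<inter> K \<noteq> {})"
      and Amin0: "\<forall>B. closedin X B \<and> B \<subseteq> C1 \<and> (\<forall>K\<in>F. B \<inter> K \<noteq> {}) \<and> B \<subseteq> A \<longrightarrow> B = A"
      using min_closed[OF cC1 KF] by (elim exE) blast
    have A: "closedin X A" "A \<subseteq> C1" "\<forall>K\<in>F. A \<inter> K \<noteq> {}" using A0 by auto
    have Amin: "\<And>B. closedin X B \<Longrightarrow> B \<subseteq> C1 \<Longrightarrow> (\<forall>K\<in>F. B \<inter> K \<noteq> {}) \<Longrightarrow> B \<subseteq> A \<Longrightarrow> B = A"
      using Amin0 by simp
    have Ane: "A \<noteq> {}" using A(3) Fne by blast
    have AT: "A \<noteq> topspace X" using A(2) C1C CT cC closedin_subset  by blast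
    have Aeq: "down_set X (A \<inter> K) = A" if K: "K \<in> F" for K
    proof (rule Amin)
      show "closedin X (down_set X (A \<inter> K))" using assms(2)[OF A(1) Ane AT] K FK by blast
      show "down_set X (A \<inter> K) \<subseteq> A" using down_lower_closed[OF A(1)] .
      thus "down_set X (A \<inter> K) \<subseteq> C1" using A(2) by blast
      show "\<forall>K'\<in>F. down_set X (A \<inter> K) \<inter> K' \<noteq> {}"
      proof
        fix K' assume K': "K' \<in> F"
        obtain K3 where K3: "K3 \<in> F" "K3 \<subseteq> K \<inter> K'" using filt K K' unfolding filtered_family_def by blast
        obtain w where w: "w \<in> A" "w \<in> K3" using A(3) K3 by blast
        have "w \<in> topspace X" using w A(1) closedin_subset  by blast
        hence "spec_le X w w" using spec_refl  by metis
        hence "w \<in> down_set X (A \<inter> K)" unfolding down_set_def using w K3 \<open>w \<in> topspace X\<close>  by blast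
        thus "down_set X (A \<inter> K) \<inter> K' \<noteq> {}" using w K3 by blast
      qed
    qed
    obtain K0 where K0: "K0 \<in> F" using Fne by blast
    hence "K0 \<in> KX X" using FK by blast
    hence "max_set X A \<noteq> {}" using assms(2)[OF A(1) Ane AT] by blast
    then obtain m where m: "m \<in> max_set X A" by blast
    have mA: "m \<in> A" and mmax: "\<forall>y\<in>A. spec_le X m y \<longrightarrow> y = m" using m unfolding max_set_def by auto
    have mK: "m \<in> K" if K: "K \<in> F" for K
    proof -
      have "m \<in> down_set X (A \<inter> K)" using Aeq[OF K] mA by simp
      then obtain y where "y \<in> A \<inter> K" "spec_le X m y" unfolding down_set_def by blast
      thus ?thesis using mmax by auto
    qed
    have "m \<in> C1" using mA A(2) by blast
    then obtain g where g: "g \<in> C" "g \<in> G" "spec_le X m g" unfolding C1_def down_set_def by blast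
    have "g \<in> K" if K: "K \<in> F" for K
      using sat_upper[OF Ksat[of K] mK[OF K] g(3)] K FK by blast
    hence "g \<in> \<Inter>F \<inter> G" using g by blast
    hence "g \<in> U" using HU by blast
    thus False using g(1) C_def by blast
  qed
qed

end
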